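(* Let $A,B\in \mathbb{R}^{m\times n}$ with $m<n$ and $b\in \mathbb{R}^m$. Suppose that the equation $Ax-B|x|=b$ has a solution $x_*$ and let $s=\operatorname{sign}(x_* )\in\{-1,0,1\}^n$ (entrywise). Let $C=A\operatorname{diag}(s)-B$. Suppose that $x_*$ has no fewer than $\operatorname{rank}(C)$ nonzero entries, and that there are index sets $\mathbb{I}_1\subseteq\{1,\dots,m\}$, $\mathbb{I}_2\subseteq\{1,\dots,n\}$ with $\operatorname{card}(\mathbb{I}_1)=\operatorname{card}(\mathbb{I}_2)=\operatorname{rank}(C)$ such that $C_{(\mathbb{I}_1,\mathbb{I}_2)}$ is nonsingular and $x_{*\mathbb{I}_2}$ has no zero entry. Let $\mathbb{I}_2^{c}=\{1,\dots,n\}\setminus\mathbb{I}_2$. (a) If not all entries of $x_{*\mathbb{I}_2^{c}}$ are $0$, then $Ax-B|x|=b$ has infinitely many solutions with the same sign pattern as $x_*$. (b) $Ax-B|x|=b$ has infinitely many solutions $x$ such that $x_{\mathbb{I}_2}$ has the same sign pattern as $x_{*\mathbb{I}_2}$. (c) If $x_{*\mathbb{I}_2^{c}}=0$, then $Ax-B|x|=b$ has no solution other than $x_*$ with the same sign pattern as $x_*$.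
   Context: $|x|$ is the entrywise absolute value; $\operatorname{diag}(s)$ is the diagonal matrix with diagonal $s$. $\operatorname{sign}(r)=1,0,-1$ for $r>0,r=0,r<0$. A vector $x$ has sign pattern $s$ if $\operatorname{sign}(x_{(i)})=s_{(i)}$ for all $i$. $X_{(\mathbb{I}_1,\mathbb{I}_2)}$ is the submatrix with rows in $\mathbb{I}_1$ and columns in $\mathbb{I}_2$; $x_{\mathbb{I}}$ is the subvector with indices in $\mathbb{I}$; $\operatorname{card}$ is cardinality. *)

theory Defs
  imports "HOL-Analysis.Analysis"
begin

text \<open>Entrywise absolute value of a vector.\<close>
definition vabs :: "real^'n \<Rightarrow> real^'n" where
  "vabs x = (\<chi> i. \<bar>x $ i\<bar>)"

text \<open>Entrywise sign vector (sgn r = 1, 0, -1).\<close>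
definition vsign :: "real^'n \<Rightarrow> real^'n" where
  "vsign x = (\<chi> i. sgn (x $ i))"

text \<open>Diagonal matrix with diagonal s.\<close>
definition diagm :: "real^'n \<Rightarrow> real^'n^'n" where
  "diagm s = (\<chi> i j. if i = j then s $ i else 0)"

text \<open>x solves the absolute value equation A x - B |x| = b.\<close>
definition ave_sol :: "real^'n^'m \<Rightarrow> real^'n^'m \<Rightarrow> real^'m \<Rightarrow> real^'n \<Rightarrow> bool" where
  "ave_sol A B b x \<longleftrightarrow> A *v x - B *v vabs x = b"

text \<open>The square submatrix C_(I1,I2) (card I1 = card I2 assumed separately)
  is nonsingular: its only null vector is 0, i.e. for y supported on I2,
  (C y)_i = 0 for all i in I1 implies y = 0.\<close>
definition nonsingular_sub :: "real^'n^'m \<Rightarrow> 'm set \<Rightarrow> 'n set \<Rightarrow> bool" where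
  "nonsingular_sub C I1 I2 \<longleftrightarrow>
     (\<forall>y::real^'n. (\<forall>j. j \<notin> I2 \<longrightarrow> y $ j = 0) \<longrightarrow>
        (\<forall>i\<in>I1. (\<Sum>j\<in>I2. C $ i $ j * y $ j) = 0) \<longrightarrow> y = 0)"

end

theory Submission
  imports Defs
begin

lemma diag_mult: "diagm s *v u = (\<chi> i. s$i * u$i)"
  by (simp add: vec_eq_iff matrix_vector_mult_def diagm_def if_distrib[of "\<lambda>a. a * _"] cong: if_cong)

lemma small_seq:
  fixes xs y :: "real^'n"
  obtains t :: "nat \<Rightarrow> real" where "inj t" "\<And>k. t k > 0"
    "\<And>k i. xs$i \<noteq> 0 \<Longrightarrow> \<bar>xs$i\<bar> + t k * y$i > 0"
proof -
  define \<mu> where "\<mu> = Min (insert 1 {\<bar>xs$i\<bar> | i. xs$i \<noteq> 0})"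
  define Y where "Y = (\<Sum>i\<in>UNIV. \<bar>y$i\<bar>) + 1"
  have fin: "finite (insert 1 {\<bar>xs$i\<bar> | i. xs$i \<noteq> 0})" by simp
  have mupos: "\<mu> > 0" unfolding \<mu>_def using fin by (subst Min_gr_iff) auto
  have mule: "\<mu> \<le> \<bar>xs$i\<bar>" if "xs$i \<noteq> 0" for i
    unfolding \<mu>_def using fin that by (intro Min_le) auto
  have Ypos: "Y > 0" unfolding Y_def by (simp add: add_nonneg_pos sum_nonneg)
  have yle: "\<bar>y$i\<bar> \<le> Y" for i
  proof -
    have "\<bar>y$i\<bar> \<le> (\<Sum>i\<in>UNIV. \<bar>y$i\<bar>)" by (rule member_le_sum) auto
    thus ?thesis unfolding Y_def by simp
  qed
  define t where "t k = \<mu> / (Y * (real k + 2))" for k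
  show ?thesis
  proof
    show "inj t" unfolding inj_def t_def using mupos Ypos by (auto simp: field_simps)
    show "t k > 0" for k unfolding t_def using mupos Ypos by simp
    show "\<bar>xs$i\<bar> + t k * y$i > 0" if "xs$i \<noteq> 0" for k i
    proof -
      have tp: "t k > 0" unfolding t_def using mupos Ypos by simp
      have "\<bar>t k * y$i\<bar> \<le> t k * Y" using yle[of i] tp by (simp add: abs_mult)
      also have "\<dots> = \<mu> / (real k + 2)" unfolding t_def using Ypos by simp
      also have "\<dots> < \<mu>" using mupos by (simp add: field_simps add_pos_nonneg)
      also have "\<dots> \<le> \<bar>xs$i\<bar>" using mule[OF that] .
      finally show ?thesis by linarith
    qed
  qed
qed

lemma core:
  assumes "\<forall>i. vsign xs $ i = 0 \<longrightarrow> u$i = 0" "\<forall>i. u$i \<ge> 0"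
    "\<forall>i. vsign xs $ i \<noteq> 0 \<longrightarrow> w$i = 0"
  shows "A *v (diagm (vsign xs) *v u + w) - B *v vabs (diagm (vsign xs) *v u + w)
    = (A ** diagm (vsign xs) - B) *v u + (A *v w - B *v vabs w)"
proof -
  have "vabs (diagm (vsign xs) *v u + w) = u + vabs w"
    using assms unfolding vec_eq_iff
    by (auto simp: diag_mult vabs_def vsign_def abs_mult sgn_if)
  thus ?thesis
    by (simp add: matrix_vector_right_distrib matrix_vector_mul_assoc[symmetric]
        matrix_vector_mult_diff_rdistrib algebra_simps)
qed

lemma colF:
  fixes C :: "real^'n^'m"
  assumes card: "card I2 = rank C"
    and ker: "\<And>z. (\<forall>j. j \<notin> I2 \<longrightarrow> z$j = 0) \<Longrightarrow> C *v z = 0 \<Longrightarrow> z = 0"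
  shows "\<exists>z. (\<forall>j. j \<notin> I2 \<longrightarrow> z$j = 0) \<and> C *v z = C *v y"
proof -
  define S where "S = {z::real^'n. \<forall>j. j \<notin> I2 \<longrightarrow> z$j = 0}"
  have subS: "subspace S" unfolding S_def subspace_def by auto
  have dimS: "dim S = card I2" using dim_substandard_cart[of I2, where 'a=real] unfolding S_def by (simp add: dim_vec_eq)
  have inj: "inj_on ((*v) C) (span S)"
    unfolding span_eq_iff[THEN iffD2, OF subS] inj_on_def
  proof (intro ballI impI)
    fix x y assume xy: "x \<in> S" "y \<in> S" "C *v x = C *v y"
    have "x - y \<in> S" using xy unfolding S_def by auto
    moreover have "C *v (x - y) = 0" using xy by (simp add: matrix_vector_mult_diff_distrib)
    ultimately have "x - y = 0" using ker unfolding S_def by blast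
    thus "x = y" by simp
  qed
  have d1: "dim ((*v) C ` S) = dim S"
    by (rule dim_image_eq[OF matrix_vector_mul_linear inj])
  have "(*v) C ` S = range ((*v) C)"
  proof (rule subspace_dim_equal)
    show "subspace ((*v) C ` S)" by (rule linear_subspace_image[OF matrix_vector_mul_linear subS])
    show "subspace (range ((*v) C))" by (rule linear_subspace_image[OF matrix_vector_mul_linear subspace_UNIV])
    show "(*v) C ` S \<subseteq> range ((*v) C)" by auto
    show "dim (range ((*v) C)) \<le> dim ((*v) C ` S)" using d1 dimS card rank_dim_range[of C] by simp
  qed
  hence "C *v y \<in> (*v) C ` S" by auto
  thus ?thesis unfolding S_def by auto
qed

lemma mv_scaleR: "A *v (c *\<^sub>R v) = c *\<^sub>R (A *v (v::real^'n))"
  by (simp add: vec_eq_iff matrix_vector_mult_def sum_distrib_left algebra_simps)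

lemma vabs_zero[simp]: "vabs 0 = 0"
  by (simp add: vabs_def vec_eq_iff)

lemma vabs_scaleR: "c \<ge> 0 \<Longrightarrow> vabs (c *\<^sub>R v) = c *\<^sub>R (vabs v)"
  by (simp add: vabs_def vec_eq_iff abs_mult)

theorem theorem3p3:
  fixes A B :: "real^'n^'m" and b :: "real^'m" and xs :: "real^'n"
    and I1 :: "'m set" and I2 :: "'n set"
  assumes mn: "CARD('m) < CARD('n)"
    and sol: "ave_sol A B b xs"
    and nnz: "card {i. xs $ i \<noteq> 0} \<ge> rank (A ** diagm (vsign xs) - B)"
    and c1: "card I1 = rank (A ** diagm (vsign xs) - B)"
    and c2: "card I2 = rank (A ** diagm (vsign xs) - B)"
    and ns: "nonsingular_sub (A ** diagm (vsign xs) - B) I1 I2"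
    and nz: "\<forall>j\<in>I2. xs $ j \<noteq> 0"
  shows "((\<exists>j\<in>- I2. xs $ j \<noteq> 0) \<longrightarrow>
            infinite {x. ave_sol A B b x \<and> vsign x = vsign xs})
       \<and> infinite {x. ave_sol A B b x \<and> (\<forall>j\<in>I2. sgn (x $ j) = sgn (xs $ j))}
       \<and> ((\<forall>j\<in>- I2. xs $ j = 0) \<longrightarrow>
            (\<forall>x. ave_sol A B b x \<and> vsign x = vsign xs \<longrightarrow> x = xs))"
proof -
  define s where "s = vsign xs"
  define D where "D = diagm s"
  define C where "C = A ** D - B"
  have si: "s$i = sgn (xs$i)" for i by (simp add: s_def vsign_def)
  have sgn0: "s$i = 0 \<longleftrightarrow> xs$i = 0" for i by (simp add: si sgn_zero_iff)
  have xsD: "D *v vabs xs = xs"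
    by (simp add: D_def diag_mult vec_eq_iff si vabs_def sgn_mult_abs)
  have solw: "ave_sol A B b (D *v u + w)"
    if "\<forall>i. s$i = 0 \<longrightarrow> u$i = 0" "\<forall>i. u$i \<ge> 0" "\<forall>i. s$i \<noteq> 0 \<longrightarrow> w$i = 0"
       "C *v u + (A *v w - B *v vabs w) = b" for u w
    using core[of xs u w A B] that unfolding ave_sol_def C_def D_def s_def by simp
  have Cxs: "C *v vabs xs = b"
  proof -
    have "A *v (D *v vabs xs + 0) - B *v vabs (D *v vabs xs + 0) = C *v vabs xs + (A *v 0 - B *v vabs 0)"
      unfolding C_def D_def s_def by (rule core) (auto simp: vabs_def vsign_def sgn_zero_iff)
    thus ?thesis using sol xsD unfolding ave_sol_def by simp
  qed
  have ker: "z = 0" if "\<forall>j. j \<notin> I2 \<longrightarrow> z$j = 0" "C *v z = 0" for z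
  proof -
    have "\<forall>i\<in>I1. (\<Sum>j\<in>I2. C $ i $ j * z $ j) = 0"
    proof
      fix i assume "i \<in> I1"
      have "(\<Sum>j\<in>I2. C $ i $ j * z $ j) = (\<Sum>j\<in>UNIV. C $ i $ j * z $ j)"
        by (rule sum.mono_neutral_left) (use that in auto)
      also have "\<dots> = (C *v z) $ i" by (simp add: matrix_vector_mult_def)
      finally show "(\<Sum>j\<in>I2. C $ i $ j * z $ j) = 0" using that by simp
    qed
    thus ?thesis using ns that(1) unfolding nonsingular_sub_def C_def D_def s_def by blast
  qed
  have colF': "\<exists>z. (\<forall>j. j \<notin> I2 \<longrightarrow> z$j = 0) \<and> C *v z = C *v y" for y
    by (rule colF) (use c2 ker in \<open>auto simp: C_def D_def s_def\<close>)
  have pa: "(\<exists>j\<in>- I2. xs $ j \<noteq> 0) \<longrightarrow> infinite {x. ave_sol A B b x \<and> vsign x = vsign xs}"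
  proof
    assume "\<exists>j\<in>- I2. xs $ j \<noteq> 0"
    then obtain j where j: "j \<notin> I2" "xs$j \<noteq> 0" by auto
    obtain z where z: "\<forall>i. i \<notin> I2 \<longrightarrow> z$i = 0" "C *v z = C *v axis j 1" using colF' by blast
    define y where "y = axis j 1 - z"
    have Cy: "C *v y = 0" by (simp add: y_def matrix_vector_mult_diff_distrib z)
    have yj: "y$j = 1" using z j by (simp add: y_def axis_def)
    have ysupp: "y$i = 0" if "xs$i = 0" for i
    proof -
      have "i \<noteq> j" using that j by auto
      moreover have "i \<notin> I2" using that nz by auto
      ultimately show ?thesis using z by (simp add: y_def axis_def)
    qed
    obtain t :: "nat \<Rightarrow> real" where t: "inj t" "\<And>k. t k > 0"
      "\<And>k i. xs$i \<noteq> 0 \<Longrightarrow> \<bar>xs$i\<bar> + t k * y$i > 0"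
      using small_seq by blast
    define u where "u k = vabs xs + t k *\<^sub>R y" for k
    define g where "g k = D *v u k + 0" for k
    have upos: "u k $ i > 0" if "xs$i \<noteq> 0" for k i
      using t(3)[OF that, of k] by (simp add: u_def vabs_def)
    have uz: "u k $ i = 0" if "xs$i = 0" for k i
      using ysupp[OF that] that by (simp add: u_def vabs_def)
    have mem: "g k \<in> {x. ave_sol A B b x \<and> vsign x = vsign xs}" for k
    proof -
      have "ave_sol A B b (g k)" unfolding g_def
      proof (rule solw)
        show "\<forall>i. s$i = 0 \<longrightarrow> u k $ i = 0" using uz sgn0 by auto
        show "\<forall>i. u k $ i \<ge> 0" using uz upos by (metis less_eq_real_def)
        show "\<forall>i. s $ i \<noteq> 0 \<longrightarrow> (0::real^'n) $ i = 0" by simp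
        show "C *v u k + (A *v 0 - B *v vabs 0) = b"
          using Cxs Cy by (simp add: u_def matrix_vector_right_distrib mv_scaleR)
      qed
      moreover have "vsign (g k) = vsign xs"
        unfolding vec_eq_iff
      proof
        fix i
        show "vsign (g k) $ i = vsign xs $ i"
        proof (cases "xs$i = 0")
          case True thus ?thesis by (simp add: g_def D_def diag_mult vsign_def si)
        next
          case False thus ?thesis using upos[OF False, of k]
            by (simp add: g_def D_def diag_mult vsign_def si sgn_mult)
        qed
      qed
      ultimately show ?thesis by simp
    qed
    have "inj g"
    proof (rule injI)
      fix k l assume "g k = g l"
      hence "g k $ j = g l $ j" by simp
      hence "s$j * (\<bar>xs$j\<bar> + t k) = s$j * (\<bar>xs$j\<bar> + t l)"
        by (simp add: g_def D_def diag_mult u_def yj vabs_def)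
      hence "t k = t l" using j sgn0 by simp
      thus "k = l" using t(1) by (simp add: inj_def)
    qed
    hence "infinite (range g)" by (rule range_inj_infinite)
    thus "infinite {x. ave_sol A B b x \<and> vsign x = vsign xs}"
      by (rule infinite_super[rotated]) (use mem in auto)
  qed
  have pc: "(\<forall>j\<in>- I2. xs $ j = 0) \<longrightarrow>
            (\<forall>x. ave_sol A B b x \<and> vsign x = vsign xs \<longrightarrow> x = xs)"
  proof (intro impI allI, elim conjE)
    fix x assume z0: "\<forall>j\<in>- I2. xs $ j = 0" and xsol: "ave_sol A B b x" and vs: "vsign x = vsign xs"
    have sx: "sgn (x$i) = s$i" for i
    proof -
      have "vsign x $ i = vsign xs $ i" using vs by simp
      thus ?thesis by (simp add: vsign_def si)
    qed
    have xD: "D *v vabs x = x"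
      by (simp add: D_def diag_mult vec_eq_iff vabs_def sgn_mult_abs flip: sx)
    have "C *v vabs x = b"
    proof -
      have "A *v (D *v vabs x + 0) - B *v vabs (D *v vabs x + 0) = C *v vabs x + (A *v 0 - B *v vabs 0)"
        unfolding C_def D_def s_def by (rule core) (use sx in \<open>auto simp: vabs_def s_def vsign_def\<close>, metis sgn_zero_iff)
      thus ?thesis using xsol xD unfolding ave_sol_def by simp
    qed
    hence C0: "C *v (vabs x - vabs xs) = 0" using Cxs by (simp add: matrix_vector_mult_diff_distrib)
    have "vabs x - vabs xs = 0"
    proof (rule ker[OF _ C0], intro allI impI)
      fix j assume "j \<notin> I2"
      hence "xs$j = 0" using z0 by auto
      hence "x$j = 0" using sx[of j] by (simp add: si sgn_zero_iff)
      thus "(vabs x - vabs xs) $ j = 0" using \<open>xs$j = 0\<close> by (simp add: vabs_def)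
    qed
    hence "vabs x = vabs xs" by simp
    thus "x = xs" using xD xsD by metis
  qed
  have pb: "infinite {x. ave_sol A B b x \<and> (\<forall>j\<in>I2. sgn (x $ j) = sgn (xs $ j))}"
  proof (cases "\<exists>j\<in>- I2. xs $ j \<noteq> 0")
    case True
    hence "infinite {x. ave_sol A B b x \<and> vsign x = vsign xs}" using pa by blast
    moreover have "{x. ave_sol A B b x \<and> vsign x = vsign xs} \<subseteq>
        {x. ave_sol A B b x \<and> (\<forall>j\<in>I2. sgn (x $ j) = sgn (xs $ j))}"
    proof (clarsimp)
      fix x j assume "vsign x = vsign xs"
      hence "vsign x $ j = vsign xs $ j" by simp
      thus "sgn (x $ j) = sgn (xs $ j)" by (simp add: vsign_def)
    qed
    ultimately show ?thesis using infinite_super by blast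
  next
    case False
    hence z0: "xs$j = 0" if "j \<notin> I2" for j using that by auto
    define p :: "real^'n" where "p = (\<chi> i. if i \<in> I2 then 0 else 1)"
    define q :: "real^'n" where "q = (\<chi> i. if i \<in> I2 then 1 else 0)"
    define M where "M = A ** diagm p + C ** diagm q"
    have "\<exists>x. x \<noteq> 0 \<and> M *v x = 0"
    proof (rule ccontr)
      assume nex: "\<not> (\<exists>x. x \<noteq> 0 \<and> M *v x = 0)"
      have "inj_on ((*v) M) (span UNIV)"
      proof (rule inj_onI)
        fix x y assume "M *v x = M *v y"
        hence "M *v (x - y) = 0" by (simp add: matrix_vector_mult_diff_distrib)
        thus "x = y" using nex by (metis eq_iff_diff_eq_0)
      qed
      hence "dim ((*v) M ` UNIV) = dim (UNIV :: (real^'n) set)"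
        by (rule dim_image_eq[OF matrix_vector_mul_linear])
      moreover have "dim ((*v) M ` UNIV) \<le> CARD('m)" by (rule dim_subset_UNIV_cart)
      ultimately show False using mn by simp
    qed
    then obtain x where x: "x \<noteq> 0" "M *v x = 0" by blast
    define w where "w = diagm p *v x"
    define zz where "zz = diagm q *v x"
    have Mx: "A *v w + C *v zz = 0" using x(2)
      by (simp add: M_def w_def zz_def matrix_vector_mul_assoc matrix_vector_mult_add_rdistrib)
    have xwz: "x = w + zz" by (simp add: w_def zz_def diag_mult vec_eq_iff p_def q_def)
    have wsupp: "w$i = 0" if "i \<in> I2" for i using that by (simp add: w_def diag_mult p_def)
    have zsupp: "\<forall>i. i \<notin> I2 \<longrightarrow> zz$i = 0" by (simp add: zz_def diag_mult q_def)
    have wne: "w \<noteq> 0"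
    proof
      assume "w = 0"
      hence "C *v zz = 0" using Mx by simp
      hence "zz = 0" using ker zsupp by blast
      thus False using \<open>w = 0\<close> xwz x(1) by simp
    qed
    have Dw: "D *v vabs w = 0"
      unfolding vec_eq_iff
    proof
      fix i show "(D *v vabs w) $ i = 0 $ i"
        using wsupp[of i] z0[of i] sgn0[of i] by (cases "i \<in> I2") (auto simp: D_def diag_mult vabs_def)
    qed
    have Cw: "C *v vabs w = - (B *v vabs w)"
      by (simp add: C_def matrix_vector_mult_diff_rdistrib matrix_vector_mul_assoc[symmetric] Dw)
    have "A *v w = - (C *v zz)" using Mx by (simp add: eq_neg_iff_add_eq_0)
    obtain z2 where z2: "\<forall>i. i \<notin> I2 \<longrightarrow> z2$i = 0" "C *v z2 = C *v (vabs w - zz)"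
      using colF' by blast
    have z2e: "C *v z2 = A *v w - B *v vabs w"
      using z2(2) Cw \<open>A *v w = - (C *v zz)\<close> by (simp add: matrix_vector_mult_diff_distrib)
    obtain t :: "nat \<Rightarrow> real" where t: "inj t" "\<And>k. t k > 0"
      "\<And>k i. xs$i \<noteq> 0 \<Longrightarrow> \<bar>xs$i\<bar> + t k * (- z2)$i > 0"
      using small_seq by blast
    define u where "u k = vabs xs - t k *\<^sub>R z2" for k
    define g where "g k = D *v u k + t k *\<^sub>R w" for k
    have upos: "u k $ i > 0" if "xs$i \<noteq> 0" for k i
      using t(3)[OF that, of k] by (simp add: u_def vabs_def)
    have uz: "u k $ i = 0" if "xs$i = 0" for k i
    proof -
      have "i \<notin> I2" using that nz by auto
      thus ?thesis using z2(1) that by (simp add: u_def vabs_def)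
    qed
    have mem: "g k \<in> {x. ave_sol A B b x \<and> (\<forall>j\<in>I2. sgn (x $ j) = sgn (xs $ j))}" for k
    proof -
      have "ave_sol A B b (g k)" unfolding g_def
      proof (rule solw)
        show "\<forall>i. s$i = 0 \<longrightarrow> u k $ i = 0" using uz sgn0 by auto
        show "\<forall>i. u k $ i \<ge> 0" using uz upos by (metis less_eq_real_def)
        show "\<forall>i. s $ i \<noteq> 0 \<longrightarrow> (t k *\<^sub>R w) $ i = 0"
          using wsupp z0 sgn0 by auto
        have "C *v u k = b - t k *\<^sub>R (A *v w - B *v vabs w)"
          using Cxs z2e by (simp add: u_def matrix_vector_mult_diff_distrib mv_scaleR)
        thus "C *v u k + (A *v (t k *\<^sub>R w) - B *v vabs (t k *\<^sub>R w)) = b"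
          using t(2)[of k] by (simp add: vabs_scaleR mv_scaleR algebra_simps)
      qed
      moreover have "sgn (g k $ j) = sgn (xs $ j)" if "j \<in> I2" for j
      proof -
        have "xs$j \<noteq> 0" using nz that by auto
        thus ?thesis using upos[of j k] wsupp[OF that]
          by (simp add: g_def D_def diag_mult si sgn_mult)
      qed
      ultimately show ?thesis by simp
    qed
    obtain i0 where i0: "w$i0 \<noteq> 0" using wne by (auto simp: vec_eq_iff)
    have i0s: "s$i0 = 0" using wsupp[of i0] i0 z0[of i0] sgn0 by auto
    have "inj g"
    proof (rule injI)
      fix k l assume "g k = g l"
      hence "g k $ i0 = g l $ i0" by simp
      hence "t k * w$i0 = t l * w$i0"
        by (simp add: g_def D_def diag_mult i0s)
      hence "t k = t l" using i0 by simp
      thus "k = l" using t(1) by (simp add: inj_def)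
    qed
    hence "infinite (range g)" by (rule range_inj_infinite)
    thus ?thesis by (rule infinite_super[rotated]) (use mem in auto)
  qed
  show ?thesis using pa pb pc by blast
qed

end
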